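(* Let $\mathcal I,\mathcal J,\mathcal K$ be ideals on $\omega$ and let $X$ be a discrete topological space. (1) For every sequence $(f_n)$ in $\mathcal C(X)$, $\mathcal I$-pointwise convergence to $0$ implies $\mathcal J$-quasi-normal convergence to $0$ if and only if $|X|<\mathfrak b_s(\mathcal J,\mathcal J,\mathcal I)$. (2) For every sequence $(f_n)$ in $\mathcal C(X)$, $\mathcal I$-pointwise convergence to $0$ implies $\mathcal K$-$\sigma$-uniform convergence to $0$ if and only if $|X|<\mathfrak b_\sigma(\mathcal I,\mathcal K)$. (3) For every sequence $(f_n)$ in $\mathcal C(X)$, $\mathcal J$-quasi-normal convergence to $0$ implies $\mathcal K$-$\sigma$-uniform convergence to $0$ if and only if $|X|<\mathrm{add}_\omega(\mathcal J,\mathcal K)$.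
   Context: An ideal on $\omega$ is a family $\mathcal I\subseteq\mathcal P(\omega)$ closed under finite unions and subsets, containing all finite sets, with $\omega\notin\mathcal I$. A real sequence $(a_n)$ is $\mathcal I$-convergent to $0$ if $\{n:|a_n|\ge\varepsilon\}\in\mathcal I$ for all $\varepsilon>0$. For a sequence $(f_n)$ of real functions on a set $X$: $\mathcal I$-pointwise convergence to $0$ means $(f_n(x))$ is $\mathcal I$-convergent to $0$ for each $x$; $\mathcal I$-uniform means $\{n:\exists x\in X\,(|f_n(x)|\ge\varepsilon)\}\in\mathcal I$ for each $\varepsilon>0$; $\mathcal I$-$\sigma$-uniform means $X=\bigcup_{k\in\omega}X_k$ with $(f_n\restriction X_k)$ $\mathcal I$-uniformly convergent to $0$ for each $k$; $\mathcal I$-quasi-normal means there is a sequence $(\varepsilon_n)$ of positive reals $\mathcal I$-convergent to $0$ with $\{n:|f_n(x)|\ge\varepsilon_n\}\in\mathcal I$ for each $x$. $\mathcal C(X)$ = continuous real functions on $X$. Cardinals (convention $\min\emptyset=\infty$, $\kappa<\infty$ for all cardinals): $\widehat{\mathcal P}_{\mathcal I}$ = sequences $(A_n)\in\mathcal I^\omega$ of pairwise disjoint sets; $\mathcal P_{\mathcal I}$ = those with $\bigcup_nA_n=\omega$; $\mathcal M_{\mathcal I}$ = sequences $(E_k)\in\mathcal I^\omega$ with $E_k\subseteq E_{k+1}$. $\mathfrak b_s(\mathcal I,\mathcal J,\mathcal K)=\min\{|\mathcal E|:\mathcal E\subseteq\widehat{\mathcal P}_{\mathcal K}$ and for every $(A_n)\in\mathcal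 P_{\mathcal J}$ there is $(E_n)\in\mathcal E$ with $\bigcup_n(A_{n+1}\cap\bigcup_{i\le n}E_i)\notin\mathcal I\}$; $\mathfrak b_\sigma(\mathcal I,\mathcal J)=\min\{|\mathcal E|:\mathcal E\subseteq\mathcal M_{\mathcal I}$ and for every $(A_n)\in\mathcal M_{\mathcal J}$ there is $(E_n)\in\mathcal E$ with $E_n\not\subseteq A_n$ for infinitely many $n\}$; $\mathrm{add}_\omega(\mathcal I,\mathcal J)=\min\{|\mathcal A|:\mathcal A\subseteq\mathcal I$ and for every $(B_n)\in\mathcal J^\omega$ there is $A\in\mathcal A$ with $A\not\subseteq B_n$ for all $n\}$. *)

theory Defs
  imports "HOL-Analysis.Analysis" "HOL-Library.Equipollence"
begin

definition is_ideal :: "nat set set \<Rightarrow> bool" where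
  "is_ideal I \<longleftrightarrow>
     (\<forall>A\<in>I. \<forall>B\<in>I. A \<union> B \<in> I) \<and>
     (\<forall>A\<in>I. \<forall>B. B \<subseteq> A \<longrightarrow> B \<in> I) \<and>
     (\<forall>A. finite A \<longrightarrow> A \<in> I) \<and>
     UNIV \<notin> I"

definition I_conv :: "nat set set \<Rightarrow> (nat \<Rightarrow> real) \<Rightarrow> bool" where
  "I_conv I a \<longleftrightarrow> (\<forall>\<epsilon>>0. {n. \<bar>a n\<bar> \<ge> \<epsilon>} \<in> I)"

definition I_pointwise :: "nat set set \<Rightarrow> 'a set \<Rightarrow> (nat \<Rightarrow> 'a \<Rightarrow> real) \<Rightarrow> bool" where
  "I_pointwise I X f \<longleftrightarrow> (\<forall>x\<in>X. I_conv I (\<lambda>n. f n x))"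

definition I_uniform :: "nat set set \<Rightarrow> 'a set \<Rightarrow> (nat \<Rightarrow> 'a \<Rightarrow> real) \<Rightarrow> bool" where
  "I_uniform I X f \<longleftrightarrow> (\<forall>\<epsilon>>0. {n. \<exists>x\<in>X. \<bar>f n x\<bar> \<ge> \<epsilon>} \<in> I)"

definition I_sigma_uniform :: "nat set set \<Rightarrow> 'a set \<Rightarrow> (nat \<Rightarrow> 'a \<Rightarrow> real) \<Rightarrow> bool" where
  "I_sigma_uniform I X f \<longleftrightarrow>
     (\<exists>Xk :: nat \<Rightarrow> 'a set. X = (\<Union>k. Xk k) \<and> (\<forall>k. I_uniform I (Xk k) f))"

definition I_quasi_normal :: "nat set set \<Rightarrow> 'a set \<Rightarrow> (nat \<Rightarrow> 'a \<Rightarrow> real) \<Rightarrow> bool" where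
  "I_quasi_normal I X f \<longleftrightarrow>
     (\<exists>eps :: nat \<Rightarrow> real. (\<forall>n. eps n > 0) \<and> I_conv I eps \<and>
        (\<forall>x\<in>X. {n. \<bar>f n x\<bar> \<ge> eps n} \<in> I))"

definition hatP :: "nat set set \<Rightarrow> (nat \<Rightarrow> nat set) set" where
  "hatP I = {A. (\<forall>n. A n \<in> I) \<and> (\<forall>n m. n \<noteq> m \<longrightarrow> A n \<inter> A m = {})}"

definition PP :: "nat set set \<Rightarrow> (nat \<Rightarrow> nat set) set" where
  "PP I = {A \<in> hatP I. (\<Union>n. A n) = UNIV}"

definition MM :: "nat set set \<Rightarrow> (nat \<Rightarrow> nat set) set" where
  "MM I = {E. (\<forall>n. E n \<in> I) \<and> (\<forall>k. E k \<subseteq> E (Suc k))}"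

text \<open>Witness families whose minimal cardinality defines the cardinal invariants.\<close>
definition bs_family :: "nat set set \<Rightarrow> nat set set \<Rightarrow> nat set set \<Rightarrow> (nat \<Rightarrow> nat set) set \<Rightarrow> bool" where
  "bs_family I J K \<E> \<longleftrightarrow> \<E> \<subseteq> hatP K \<and>
     (\<forall>A\<in>PP J. \<exists>E\<in>\<E>. (\<Union>n. A (Suc n) \<inter> (\<Union>i\<le>n. E i)) \<notin> I)"

definition bsigma_family :: "nat set set \<Rightarrow> nat set set \<Rightarrow> (nat \<Rightarrow> nat set) set \<Rightarrow> bool" where
  "bsigma_family I J \<E> \<longleftrightarrow> \<E> \<subseteq> MM I \<and>
     (\<forall>A\<in>MM J. \<exists>E\<in>\<E>. infinite {n. \<not> E n \<subseteq> A n})"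

definition addw_family :: "nat set set \<Rightarrow> nat set set \<Rightarrow> nat set set \<Rightarrow> bool" where
  "addw_family I J \<A> \<longleftrightarrow> \<A> \<subseteq> I \<and>
     (\<forall>B :: nat \<Rightarrow> nat set. (\<forall>n. B n \<in> J) \<longrightarrow> (\<exists>A\<in>\<A>. \<forall>n. \<not> A \<subseteq> B n))"

text \<open>|X| < min{|E| : Fam E} (with min of the empty set = infinity):
  no witness family has cardinality \<le> |X|.\<close>
definition card_below :: "'a set \<Rightarrow> ('b set \<Rightarrow> bool) \<Rightarrow> bool" where
  "card_below X Fam \<longleftrightarrow> (\<forall>E. Fam E \<longrightarrow> \<not> (E \<lesssim> X))"

end

theory Submission
  imports Defs
begin

lemma ideal_sub: "is_ideal I \<Longrightarrow> A \<in> I \<Longrightarrow> B \<subseteq> A \<Longrightarrow> B \<in> I"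
  unfolding is_ideal_def by blast
lemma ideal_Un: "is_ideal I \<Longrightarrow> A \<in> I \<Longrightarrow> B \<in> I \<Longrightarrow> A \<union> B \<in> I"
  unfolding is_ideal_def by blast
lemma ideal_fin: "is_ideal I \<Longrightarrow> finite A \<Longrightarrow> A \<in> I"
  unfolding is_ideal_def by blast
lemma ideal_UN: fixes N :: nat shows "is_ideal I \<Longrightarrow> (\<And>i. i \<le> N \<Longrightarrow> A i \<in> I) \<Longrightarrow> (\<Union>i\<le>N. A i) \<in> I"
proof (induction N)
  case 0 then show ?case by simp
next
  case (Suc N) then show ?case by (simp add: atMost_Suc ideal_Un)
qed

lemma small_inv: "(\<epsilon>::real) > 0 \<Longrightarrow> \<exists>N. 1 / real (Suc N) < \<epsilon>"
proof -
  assume "\<epsilon> > 0"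
  then obtain n where "n > 0" "inverse (real n) < \<epsilon>" using ex_inverse_of_nat_less by blast
  then have "1 / real (Suc n) < \<epsilon>"
    by (smt (verit) divide_less_eq_1 inverse_eq_divide less_imp_inverse_less of_nat_0_less_iff of_nat_less_iff lessI)
  then show ?thesis by blast
qed

lemma inv_mono: "i \<le> n \<Longrightarrow> 1 / real (Suc n) \<le> 1 / real (Suc i)"
  by (simp add: frac_le)

definition FF :: "('a \<Rightarrow> nat \<Rightarrow> nat set) \<Rightarrow> nat \<Rightarrow> 'a \<Rightarrow> real" where
  "FF h n x = (if \<exists>i. n \<in> h x i then 1 / real (Suc (LEAST i. n \<in> h x i)) else 0)"

lemma FF_ge: "n \<in> h x i \<Longrightarrow> FF h n x \<ge> 1 / real (Suc i)"
proof -
  assume a: "n \<in> h x i"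
  then have "(LEAST i. n \<in> h x i) \<le> i" by (rule Least_le)
  then have "1 / real (Suc i) \<le> 1 / real (Suc (LEAST i. n \<in> h x i))" by (rule inv_mono)
  moreover have "FF h n x = 1 / real (Suc (LEAST i. n \<in> h x i))" using a unfolding FF_def by auto
  ultimately show ?thesis by simp
qed

lemma FF_pw:
  assumes I: "is_ideal I" and h: "\<And>x i. x \<in> X \<Longrightarrow> h x i \<in> I"
  shows "I_pointwise I X (FF h)"
  unfolding I_pointwise_def I_conv_def
proof (intro ballI allI impI)
  fix x \<epsilon> assume x: "x \<in> X" and e: "(\<epsilon>::real) > 0"
  obtain N where N: "1 / real (Suc N) < \<epsilon>" using small_inv[OF e] by blast
  have "{n. \<epsilon> \<le> \<bar>FF h n x\<bar>} \<subseteq> (\<Union>i\<le>N. h x i)"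
  proof
    fix n assume n: "n \<in> {n. \<epsilon> \<le> \<bar>FF h n x\<bar>}"
    show "n \<in> (\<Union>i\<le>N. h x i)"
    proof (cases "\<exists>i. n \<in> h x i")
      case True
      let ?L = "LEAST i. n \<in> h x i"
      have L: "n \<in> h x ?L" using True by (rule LeastI_ex)
      have "\<epsilon> \<le> 1 / real (Suc ?L)" using n True unfolding FF_def by simp
      then have "1 / real (Suc N) < 1 / real (Suc ?L)" using N by linarith
      then have "?L \<le> N"
        by (metis inv_mono not_le order.strict_iff_not less_imp_le_nat)
      then show ?thesis using L by blast
    next
      case False then show ?thesis using n e unfolding FF_def by simp
    qed
  qed
  moreover have "(\<Union>i\<le>N. h x i) \<in> I" using ideal_UN[OF I] h[OF x] by blast
  ultimately show "{n. \<epsilon> \<le> \<bar>FF h n x\<bar>} \<in> I" using ideal_sub[OF I] by blast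
qed

lemma ideal_empty: "is_ideal I \<Longrightarrow> {} \<in> I"
  by (simp add: ideal_fin)

lemma get_h:
  assumes "E \<lesssim> X" and "\<And>e. e \<in> E \<Longrightarrow> P e" and "P d"
  shows "\<exists>h. (\<forall>x. P (h x)) \<and> (\<forall>e\<in>E. \<exists>x\<in>X. h x = e)"
proof -
  obtain g where g: "E \<subseteq> g ` X" using assms(1) unfolding lepoll_iff by blast
  define h where "h x = (if g x \<in> E then g x else d)" for x
  have 1: "P (h x)" for x unfolding h_def using assms(2,3) by simp
  have 2: "\<exists>x\<in>X. h x = e" if e: "e \<in> E" for e
  proof -
    obtain x where "x \<in> X" "e = g x" using g e by blast
    then show ?thesis unfolding h_def using e by auto
  qed
  show ?thesis using 1 2 by blast
qed

lemma p1_nec: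
  assumes I: "is_ideal I" and J: "is_ideal J"
    and H: "\<forall>f :: nat \<Rightarrow> 'a \<Rightarrow> real.
             (\<forall>n. continuous_map (discrete_topology X) euclideanreal (f n)) \<longrightarrow>
             I_pointwise I X f \<longrightarrow> I_quasi_normal J X f"
  shows "card_below X (bs_family J J I)"
  unfolding card_below_def
proof (intro allI impI notI)
  fix \<E> assume bs: "bs_family J J I \<E>" and le: "\<E> \<lesssim> X"
  have hd: "(\<lambda>_. {}) \<in> hatP I" unfolding hatP_def using ideal_empty[OF I] by auto
  have sub: "\<And>e. e \<in> \<E> \<Longrightarrow> e \<in> hatP I" using bs unfolding bs_family_def by blast
  obtain h where h: "\<And>x. h x \<in> hatP I" and hs: "\<And>e. e \<in> \<E> \<Longrightarrow> \<exists>x\<in>X. h x = e"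
    using get_h[where P="\<lambda>e. e \<in> hatP I", OF le sub hd] by blast
  have "I_pointwise I X (FF h)"
    by (rule FF_pw[OF I]) (use h in \<open>auto simp: hatP_def\<close>)
  then have "I_quasi_normal J X (FF h)" using H by simp
  then obtain eps where epos: "\<And>n. eps n > 0" and ec: "I_conv J eps"
    and qn: "\<And>x. x \<in> X \<Longrightarrow> {n. \<bar>FF h n x\<bar> \<ge> eps n} \<in> J"
    unfolding I_quasi_normal_def by blast
  define A where "A j = {m. nat \<lfloor>1 / eps m\<rfloor> = j}" for j
  have "A \<in> PP J"
    unfolding PP_def hatP_def
  proof (intro CollectI conjI allI impI)
    fix j
    have "A j \<subseteq> {m. \<bar>eps m\<bar> \<ge> 1 / real (Suc j)}"
    proof
      fix m assume "m \<in> A j"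
      then have "nat \<lfloor>1 / eps m\<rfloor> = j" unfolding A_def by simp
      moreover have "1 / eps m > 0" using epos[of m] by simp
      ultimately have "\<lfloor>1 / eps m\<rfloor> = int j" by linarith
      then have "1 / eps m < real j + 1" by linarith
      then show "m \<in> {m. \<bar>eps m\<bar> \<ge> 1 / real (Suc j)}" using epos[of m]
        by (simp add: field_simps)
    qed
    moreover have "{m. \<bar>eps m\<bar> \<ge> 1 / real (Suc j)} \<in> J" using ec unfolding I_conv_def by simp
    ultimately show "A j \<in> J" using ideal_sub[OF J] by blast
  qed (auto simp: A_def)
  then obtain E where E: "E \<in> \<E>" and U: "(\<Union>n. A (Suc n) \<inter> (\<Union>i\<le>n. E i)) \<notin> J"
    using bs unfolding bs_family_def by blast
  obtain x where x: "x \<in> X" "h x = E" using hs[OF E] by blast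
  have "(\<Union>n. A (Suc n) \<inter> (\<Union>i\<le>n. E i)) \<subseteq> {n. \<bar>FF h n x\<bar> \<ge> eps n}"
  proof
    fix m assume "m \<in> (\<Union>n. A (Suc n) \<inter> (\<Union>i\<le>n. E i))"
    then obtain n i where m: "nat \<lfloor>1 / eps m\<rfloor> = Suc n" "i \<le> n" "m \<in> h x i"
      unfolding A_def x(2) by blast
    have "FF h m x \<ge> 1 / real (Suc i)" using FF_ge m(3) .
    moreover have "1 / real (Suc n) \<le> 1 / real (Suc i)" using inv_mono m(2) .
    moreover have "1 / eps m > 0" using epos[of m] by simp
    then have "\<lfloor>1 / eps m\<rfloor> = int (Suc n)" using m(1) by linarith
    then have "real (Suc n) \<le> 1 / eps m" by linarith
    then have "eps m \<le> 1 / real (Suc n)" using epos[of m]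
      by (simp add: field_simps)
    ultimately show "m \<in> {n. \<bar>FF h n x\<bar> \<ge> eps n}" by simp
  qed
  then show False using U qn[OF x(1)] ideal_sub[OF J] by blast
qed


lemma p2_nec:
  assumes I: "is_ideal I" and K: "is_ideal K"
    and H: "\<forall>f :: nat \<Rightarrow> 'a \<Rightarrow> real.
             (\<forall>n. continuous_map (discrete_topology X) euclideanreal (f n)) \<longrightarrow>
             I_pointwise I X f \<longrightarrow> I_sigma_uniform K X f"
  shows "card_below X (bsigma_family I K)"
  unfolding card_below_def
proof (intro allI impI notI)
  fix \<E> assume bs: "bsigma_family I K \<E>" and le: "\<E> \<lesssim> X"
  have hd: "(\<lambda>_. {}) \<in> MM I" unfolding MM_def using ideal_empty[OF I] by auto
  have sub: "\<And>e. e \<in> \<E> \<Longrightarrow> e \<in> MM I" using bs unfolding bsigma_family_def by blast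
  obtain h where h: "\<And>x. h x \<in> MM I" and hs: "\<And>e. e \<in> \<E> \<Longrightarrow> \<exists>x\<in>X. h x = e"
    using get_h[where P="\<lambda>e. e \<in> MM I", OF le sub hd] by blast
  have "I_pointwise I X (FF h)"
    by (rule FF_pw[OF I]) (use h in \<open>auto simp: MM_def\<close>)
  then have "I_sigma_uniform K X (FF h)" using H by simp
  then have "\<exists>Xk. X = (\<Union>k::nat. Xk k) \<and> (\<forall>k. I_uniform K (Xk k) (FF h))"
    unfolding I_sigma_uniform_def by simp
  then obtain Xk where XU0: "X = (\<Union>k::nat. Xk k) \<and> (\<forall>k. I_uniform K (Xk k) (FF h))" ..
  have XU: "\<exists>m. x \<in> Xk m" if "x \<in> X" for x using XU0 that by auto
  have un: "I_uniform K (Xk k) (FF h)" for k using XU0 by simp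
  define C where "C m k = {n. \<exists>x\<in>Xk m. \<bar>FF h n x\<bar> \<ge> 1 / real (Suc k)}" for m k
  have CK: "C m k \<in> K" for m k
  proof -
    have "1 / real (Suc k) > 0" by simp
    then show ?thesis using un[of m] unfolding I_uniform_def C_def by blast
  qed
  define A where "A k = (\<Union>m\<le>k. C m k)" for k
  have Cmono: "C m k \<subseteq> C m (Suc k)" for m k
  proof
    fix n assume "n \<in> C m k"
    then obtain x where "x \<in> Xk m" "\<bar>FF h n x\<bar> \<ge> 1 / real (Suc k)" unfolding C_def by blast
    moreover have "1 / real (Suc (Suc k)) \<le> 1 / real (Suc k)" by (rule inv_mono) simp
    ultimately have "x \<in> Xk m" "\<bar>FF h n x\<bar> \<ge> 1 / real (Suc (Suc k))" by simp_all
    then show "n \<in> C m (Suc k)" unfolding C_def by blast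
  qed
  have "A \<in> MM K"
    unfolding MM_def
  proof (intro CollectI conjI allI)
    fix k show "A k \<in> K" unfolding A_def by (rule ideal_UN[OF K]) (rule CK)
  next
    fix k show "A k \<subseteq> A (Suc k)"
    proof
      fix n assume "n \<in> A k"
      then obtain m where "m \<le> k" "n \<in> C m k" unfolding A_def by blast
      then have "m \<le> Suc k" "n \<in> C m (Suc k)" using Cmono by auto
      then show "n \<in> A (Suc k)" unfolding A_def by blast
    qed
  qed
  then obtain E where E: "E \<in> \<E>" and inf: "infinite {k. \<not> E k \<subseteq> A k}"
    using bs unfolding bsigma_family_def by blast
  obtain x where x: "x \<in> X" "h x = E" using hs[OF E] by blast
  obtain m where m: "x \<in> Xk m" using XU[OF x(1)] ..
  have "{k. \<not> E k \<subseteq> A k} \<subseteq> {..<m}"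
  proof
    fix k assume k: "k \<in> {k. \<not> E k \<subseteq> A k}"
    show "k \<in> {..<m}"
    proof (rule ccontr)
      assume "k \<notin> {..<m}"
      then have mk: "m \<le> k" by simp
      have "E k \<subseteq> A k"
      proof
        fix n assume "n \<in> E k"
        then have "n \<in> h x k" using x(2) by simp
        then have "FF h n x \<ge> 1 / real (Suc k)" by (rule FF_ge)
        then have "\<bar>FF h n x\<bar> \<ge> 1 / real (Suc k)" by linarith
        then have "n \<in> C m k" unfolding C_def using m by blast
        then show "n \<in> A k" unfolding A_def using mk by blast
      qed
      then show False using k by simp
    qed
  qed
  then have "finite {k. \<not> E k \<subseteq> A k}" using finite_subset finite_lessThan by blast
  then show False using inf by blast
qed

lemma p1_suff:
  assumes I: "is_ideal I" and J: "is_ideal J" and cb: "card_below X (bs_family J J I)"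
    and pw: "I_pointwise I X f"
  shows "I_quasi_normal J X f"
proof -
  define Ex where "Ex x i = {n. 1 / real (Suc i) \<le> \<bar>f n x\<bar> \<and> (\<forall>j<i. \<bar>f n x\<bar> < 1 / real (Suc j))}" for x i
  have hp: "Ex x \<in> hatP I" if x: "x \<in> X" for x
    unfolding hatP_def
  proof (intro CollectI conjI allI impI)
    fix i
    have "Ex x i \<subseteq> {n. \<bar>f n x\<bar> \<ge> 1 / real (Suc i)}" unfolding Ex_def by blast
    moreover have "{n. \<bar>f n x\<bar> \<ge> 1 / real (Suc i)} \<in> I" using pw x
      unfolding I_pointwise_def I_conv_def by simp
    ultimately show "Ex x i \<in> I" using ideal_sub[OF I] by blast
  next
    fix i j :: nat assume "i \<noteq> j"
    then consider "i < j" | "j < i" by linarith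
    then show "Ex x i \<inter> Ex x j = {}" unfolding Ex_def
      by cases fastforce+
  qed
  have Exu: "{m. \<bar>f m x\<bar> \<ge> 1 / real (Suc n)} \<subseteq> (\<Union>i\<le>n. Ex x i)" for x n
  proof
    fix m assume m: "m \<in> {m. \<bar>f m x\<bar> \<ge> 1 / real (Suc n)}"
    let ?L = "LEAST i. \<bar>f m x\<bar> \<ge> 1 / real (Suc i)"
    have L1: "\<bar>f m x\<bar> \<ge> 1 / real (Suc ?L)" using m by (metis (mono_tags) LeastI mem_Collect_eq)
    have L2: "?L \<le> n" using m by (simp add: Least_le)
    have L3: "\<forall>j<?L. \<bar>f m x\<bar> < 1 / real (Suc j)" using not_less_Least by (metis not_le)
    show "m \<in> (\<Union>i\<le>n. Ex x i)" unfolding Ex_def using L1 L2 L3 by blast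
  qed
  have "(\<lambda>x. Ex x) ` X \<lesssim> X" by (rule image_lepoll)
  then have "\<not> bs_family J J I ((\<lambda>x. Ex x) ` X)" using cb unfolding card_below_def by blast
  moreover have "(\<lambda>x. Ex x) ` X \<subseteq> hatP I" using hp by blast
  ultimately obtain A where A: "A \<in> PP J"
    and AU: "\<And>x. x \<in> X \<Longrightarrow> (\<Union>n. A (Suc n) \<inter> (\<Union>i\<le>n. Ex x i)) \<in> J"
    unfolding bs_family_def by blast
  have AJ: "\<And>j. A j \<in> J" and Ad: "\<And>i j. i \<noteq> j \<Longrightarrow> A i \<inter> A j = {}"
    and Au: "(\<Union>n. A n) = UNIV" using A unfolding PP_def hatP_def by auto
  define idx where "idx m = (SOME j. m \<in> A j)" for m
  have idx: "m \<in> A (idx m)" for m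
  proof -
    have "\<exists>j. m \<in> A j" using Au by blast
    then show ?thesis unfolding idx_def by (rule someI_ex)
  qed
  have idxu: "m \<in> A j \<Longrightarrow> idx m = j" for m j using idx Ad by blast
  define eps where "eps m = 1 / real (max 1 (idx m))" for m
  show ?thesis unfolding I_quasi_normal_def
  proof (intro exI[of _ eps] conjI allI ballI)
    fix n show "eps n > 0" unfolding eps_def by simp
  next
    show "I_conv J eps" unfolding I_conv_def
    proof (intro allI impI)
      fix \<epsilon> :: real assume e: "\<epsilon> > 0"
      obtain N where N: "1 / real (Suc N) < \<epsilon>" using small_inv[OF e] by blast
      have "{n. \<epsilon> \<le> \<bar>eps n\<bar>} \<subseteq> (\<Union>j\<le>N. A j)"
      proof
        fix m assume m: "m \<in> {n. \<epsilon> \<le> \<bar>eps n\<bar>}"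
        have "idx m \<le> N"
        proof (rule ccontr)
          assume "\<not> idx m \<le> N"
          then have "Suc N \<le> idx m" by simp
          then have "eps m \<le> 1 / real (Suc N)" unfolding eps_def
            by (simp add: frac_le)
          then show False using m N unfolding eps_def by simp
        qed
        then show "m \<in> (\<Union>j\<le>N. A j)" using idx by blast
      qed
      moreover have "(\<Union>j\<le>N. A j) \<in> J" by (rule ideal_UN[OF J]) (rule AJ)
      ultimately show "{n. \<epsilon> \<le> \<bar>eps n\<bar>} \<in> J" using ideal_sub[OF J] by blast
    qed
  next
    fix x assume x: "x \<in> X"
    have "{n. \<bar>f n x\<bar> \<ge> eps n} \<subseteq> A 0 \<union> (\<Union>n. A (Suc n) \<inter> (\<Union>i\<le>n. Ex x i))"
    proof
      fix m assume m: "m \<in> {n. \<bar>f n x\<bar> \<ge> eps n}"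
      show "m \<in> A 0 \<union> (\<Union>n. A (Suc n) \<inter> (\<Union>i\<le>n. Ex x i))"
      proof (cases "idx m")
        case 0 then show ?thesis using idx[of m] by simp
      next
        case (Suc n)
        then have "eps m = 1 / real (Suc n)" unfolding eps_def by simp
        then have "m \<in> (\<Union>i\<le>n. Ex x i)" using m Exu[of n x] by auto
        then show ?thesis using idx[of m] Suc by auto
      qed
    qed
    moreover have "A 0 \<union> (\<Union>n. A (Suc n) \<inter> (\<Union>i\<le>n. Ex x i)) \<in> J"
      using ideal_Un[OF J AJ AU[OF x]] .
    ultimately show "{n. \<bar>f n x\<bar> \<ge> eps n} \<in> J" using ideal_sub[OF J] by blast
  qed
qed


lemma p2_suff:
  assumes I: "is_ideal I" and K: "is_ideal K" and cb: "card_below X (bsigma_family I K)"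
    and pw: "I_pointwise I X f"
  shows "I_sigma_uniform K X f"
proof -
  define Ex where "Ex x k = {n. \<bar>f n x\<bar> \<ge> 1 / real (Suc k)}" for x k
  have hp: "Ex x \<in> MM I" if x: "x \<in> X" for x
    unfolding MM_def
  proof (intro CollectI conjI allI)
    fix k show "Ex x k \<in> I" using pw x unfolding I_pointwise_def I_conv_def Ex_def by simp
  next
    fix k
    have "1 / real (Suc (Suc k)) \<le> 1 / real (Suc k)" by (rule inv_mono) simp
    then show "Ex x k \<subseteq> Ex x (Suc k)" unfolding Ex_def by auto
  qed
  have "(\<lambda>x. Ex x) ` X \<lesssim> X" by (rule image_lepoll)
  then have "\<not> bsigma_family I K ((\<lambda>x. Ex x) ` X)" using cb unfolding card_below_def by blast
  moreover have "(\<lambda>x. Ex x) ` X \<subseteq> MM I" using hp by blast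
  ultimately obtain A where A: "A \<in> MM K"
    and fin: "\<And>x. x \<in> X \<Longrightarrow> finite {k. \<not> Ex x k \<subseteq> A k}"
    unfolding bsigma_family_def by blast
  have AK: "\<And>k. A k \<in> K" and Am: "\<And>k. A k \<subseteq> A (Suc k)" using A unfolding MM_def by auto
  have Amono: "A k \<subseteq> A k'" if "k \<le> k'" for k k'
    using lift_Suc_mono_le[of A, OF Am that] .
  define Xk where "Xk m = {x \<in> X. \<forall>k\<ge>m. Ex x k \<subseteq> A k}" for m
  show ?thesis unfolding I_sigma_uniform_def
  proof (intro exI[of _ Xk] conjI allI)
    show "X = (\<Union>m::nat. Xk m)"
    proof
      show "X \<subseteq> (\<Union>m. Xk m)"
      proof
        fix x assume x: "x \<in> X"
        obtain m where "{k. \<not> Ex x k \<subseteq> A k} \<subseteq> {..<m}"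
          using finite_nat_bounded[OF fin[OF x]] by blast
        then have "\<forall>k\<ge>m. Ex x k \<subseteq> A k" by force
        then show "x \<in> (\<Union>m. Xk m)" unfolding Xk_def using x by blast
      qed
    qed (auto simp: Xk_def)
  next
    fix m show "I_uniform K (Xk m) f" unfolding I_uniform_def
    proof (intro allI impI)
      fix \<epsilon> :: real assume e: "\<epsilon> > 0"
      obtain N where N: "1 / real (Suc N) < \<epsilon>" using small_inv[OF e] by blast
      define k where "k = max m N"
      have "1 / real (Suc k) \<le> 1 / real (Suc N)" unfolding k_def by (rule inv_mono) simp
      have "{n. \<exists>x\<in>Xk m. \<epsilon> \<le> \<bar>f n x\<bar>} \<subseteq> A k"
      proof
        fix n assume "n \<in> {n. \<exists>x\<in>Xk m. \<epsilon> \<le> \<bar>f n x\<bar>}"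
        then obtain x where x: "x \<in> Xk m" "\<epsilon> \<le> \<bar>f n x\<bar>" by blast
        have "n \<in> Ex x k" unfolding Ex_def using x(2) N \<open>1 / real (Suc k) \<le> 1 / real (Suc N)\<close> by simp
        moreover have "Ex x k \<subseteq> A k" using x(1) unfolding Xk_def k_def by simp
        ultimately show "n \<in> A k" by blast
      qed
      then show "{n. \<exists>x\<in>Xk m. \<epsilon> \<le> \<bar>f n x\<bar>} \<in> K" using ideal_sub[OF K AK] by blast
    qed
  qed
qed

lemma p3_suff:
  assumes J: "is_ideal J" and K: "is_ideal K" and cb: "card_below X (addw_family J K)"
    and qn: "I_quasi_normal J X f"
  shows "I_sigma_uniform K X f"
proof (cases "X = {}")
  case True
  show ?thesis unfolding I_sigma_uniform_def
    by (rule exI[of _ "\<lambda>_. {}"]) (simp add: True I_uniform_def ideal_empty[OF K])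
next
  case False
  then obtain x0 where x0: "x0 \<in> X" by blast
  have JK: "B \<in> K" if B: "B \<in> J" for B
  proof -
    have "(\<lambda>_. B) ` X \<lesssim> X" by (rule image_lepoll)
    moreover have "(\<lambda>_. B) ` X = {B}" using x0 by blast
    ultimately have "{B} \<lesssim> X" by simp
    then have "\<not> addw_family J K {B}" using cb unfolding card_below_def by blast
    moreover have "{B} \<subseteq> J" using B by simp
    ultimately have "\<exists>C::nat \<Rightarrow> nat set. (\<forall>n. C n \<in> K) \<and> (\<exists>n. B \<subseteq> C n)" unfolding addw_family_def by simp
    then obtain C n where C: "\<And>n. C n \<in> K" and "B \<subseteq> C n" by blast
    then show ?thesis using ideal_sub[OF K C] by blast
  qed
  obtain eps where eps0: "(\<forall>n. eps n > 0) \<and> I_conv J eps \<and> (\<forall>x\<in>X. {n. \<bar>f n x\<bar> \<ge> eps n} \<in> J)"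
    using qn unfolding I_quasi_normal_def ..
  have ec: "I_conv J eps" and qs: "\<And>x. x \<in> X \<Longrightarrow> {n. \<bar>f n x\<bar> \<ge> eps n} \<in> J"
    using eps0 by auto
  define Ax where "Ax x = {n. \<bar>f n x\<bar> \<ge> eps n}" for x
  have "(\<lambda>x. Ax x) ` X \<lesssim> X" by (rule image_lepoll)
  then have "\<not> addw_family J K ((\<lambda>x. Ax x) ` X)" using cb unfolding card_below_def by blast
  moreover have "(\<lambda>x. Ax x) ` X \<subseteq> J" using qs unfolding Ax_def by blast
  ultimately have "\<not> (\<forall>B :: nat \<Rightarrow> nat set. (\<forall>n. B n \<in> K) \<longrightarrow> (\<exists>A\<in>(\<lambda>x. Ax x) ` X. \<forall>n. \<not> A \<subseteq> B n))"
    unfolding addw_family_def by simp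
  then obtain B :: "nat \<Rightarrow> nat set" where BK0: "\<forall>n. B n \<in> K"
    and cov0: "\<forall>A\<in>(\<lambda>x. Ax x) ` X. \<exists>n. A \<subseteq> B n" by auto
  have BK: "\<And>n. B n \<in> K" using BK0 by simp
  have cov: "\<And>x. x \<in> X \<Longrightarrow> \<exists>n. Ax x \<subseteq> B n" using cov0 by simp
  define Xk where "Xk k = {x \<in> X. Ax x \<subseteq> B k}" for k
  show ?thesis unfolding I_sigma_uniform_def
  proof (intro exI[of _ Xk] conjI allI)
    show "X = (\<Union>k::nat. Xk k)"
    proof
      show "X \<subseteq> (\<Union>k::nat. Xk k)"
      proof
        fix x assume x: "x \<in> X"
        then obtain n where "Ax x \<subseteq> B n" using cov by blast
        then have "x \<in> Xk n" unfolding Xk_def using x by simp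
        then show "x \<in> (\<Union>k::nat. Xk k)" by blast
      qed
    qed (auto simp: Xk_def)
  next
    fix k show "I_uniform K (Xk k) f" unfolding I_uniform_def
    proof (intro allI impI)
      fix \<epsilon> :: real assume e: "\<epsilon> > 0"
      have "{n. \<exists>x\<in>Xk k. \<epsilon> \<le> \<bar>f n x\<bar>} \<subseteq> B k \<union> {n. \<epsilon> \<le> \<bar>eps n\<bar>}"
      proof
        fix n assume "n \<in> {n. \<exists>x\<in>Xk k. \<epsilon> \<le> \<bar>f n x\<bar>}"
        then obtain x where x: "x \<in> Xk k" "\<epsilon> \<le> \<bar>f n x\<bar>" by blast
        show "n \<in> B k \<union> {n. \<epsilon> \<le> \<bar>eps n\<bar>}"
        proof (cases "n \<in> B k")
          case False
          then have "n \<notin> Ax x" using x(1) unfolding Xk_def by blast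
          then have "\<bar>f n x\<bar> < eps n" unfolding Ax_def by simp
          then show ?thesis using x(2) by simp
        qed simp
      qed
      moreover have "{n. \<epsilon> \<le> \<bar>eps n\<bar>} \<in> K" using ec e JK unfolding I_conv_def by blast
      ultimately show "{n. \<exists>x\<in>Xk k. \<epsilon> \<le> \<bar>f n x\<bar>} \<in> K"
        using ideal_Un[OF K BK] ideal_sub[OF K] by blast
    qed
  qed
qed

lemma p3_nec:
  assumes J: "is_ideal J" and K: "is_ideal K"
    and H: "\<forall>f :: nat \<Rightarrow> 'a \<Rightarrow> real.
             (\<forall>n. continuous_map (discrete_topology X) euclideanreal (f n)) \<longrightarrow>
             I_quasi_normal J X f \<longrightarrow> I_sigma_uniform K X f"
  shows "card_below X (addw_family J K)"
  unfolding card_below_def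
proof (intro allI impI notI)
  fix \<A> assume aw: "addw_family J K \<A>" and le: "\<A> \<lesssim> X"
  have hd: "{} \<in> J" using ideal_empty[OF J] .
  have sub: "\<And>e. e \<in> \<A> \<Longrightarrow> e \<in> J" using aw unfolding addw_family_def by blast
  obtain h where h: "\<And>x. h x \<in> J" and hs: "\<And>e. e \<in> \<A> \<Longrightarrow> \<exists>x\<in>X. h x = e"
    using get_h[where P="\<lambda>e. e \<in> J", OF le sub hd] by blast
  define f :: "nat \<Rightarrow> 'a \<Rightarrow> real" where "f n x = (if n \<in> h x then 1 else 0)" for n x
  define eps :: "nat \<Rightarrow> real" where "eps n = 1 / real (Suc n)" for n
  have "I_quasi_normal J X f" unfolding I_quasi_normal_def
  proof (intro exI[of _ eps] conjI allI ballI)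
    fix n show "eps n > 0" unfolding eps_def by simp
  next
    show "I_conv J eps" unfolding I_conv_def
    proof (intro allI impI)
      fix \<epsilon> :: real assume e: "\<epsilon> > 0"
      obtain N where N: "1 / real (Suc N) < \<epsilon>" using small_inv[OF e] by blast
      have "{n. \<epsilon> \<le> \<bar>eps n\<bar>} \<subseteq> {..N}"
      proof
        fix n assume n: "n \<in> {n. \<epsilon> \<le> \<bar>eps n\<bar>}"
        show "n \<in> {..N}"
        proof (rule ccontr)
          assume "n \<notin> {..N}"
          then have "N \<le> n" by simp
          then have "eps n \<le> 1 / real (Suc N)" unfolding eps_def by (rule inv_mono)
          then show False using n N unfolding eps_def by simp
        qed
      qed
      then show "{n. \<epsilon> \<le> \<bar>eps n\<bar>} \<in> J" using ideal_fin[OF J] finite_subset by blast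
    qed
  next
    fix x assume x: "x \<in> X"
    have "{n. \<bar>f n x\<bar> \<ge> eps n} \<subseteq> h x"
    proof
      fix n assume "n \<in> {n. \<bar>f n x\<bar> \<ge> eps n}"
      moreover have "eps n > 0" unfolding eps_def by simp
      ultimately show "n \<in> h x" unfolding f_def by (auto split: if_splits)
    qed
    then show "{n. \<bar>f n x\<bar> \<ge> eps n} \<in> J" using ideal_sub[OF J h] by blast
  qed
  then have "I_sigma_uniform K X f" using H by simp
  then have "\<exists>Xk. X = (\<Union>k::nat. Xk k) \<and> (\<forall>k. I_uniform K (Xk k) f)"
    unfolding I_sigma_uniform_def by simp
  then obtain Xk where XU0: "X = (\<Union>k::nat. Xk k) \<and> (\<forall>k. I_uniform K (Xk k) f)" ..
  define B where "B k = {n. \<exists>x\<in>Xk k. \<bar>f n x\<bar> \<ge> 1/2}" for k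
  have BK: "B k \<in> K" for k
  proof -
    have "I_uniform K (Xk k) f" using XU0 by simp
    then have u: "\<forall>\<epsilon>>0. {n. \<exists>x\<in>Xk k. \<bar>f n x\<bar> \<ge> \<epsilon>} \<in> K" unfolding I_uniform_def .
    have "(1/2::real) > 0" by simp
    from u[rule_format, OF this] show ?thesis unfolding B_def .
  qed
  then obtain A where A: "A \<in> \<A>" and nA: "\<And>n. \<not> A \<subseteq> B n"
    using aw unfolding addw_family_def by blast
  obtain x where x: "x \<in> X" "h x = A" using hs[OF A] by blast
  obtain k where k: "x \<in> Xk k" using XU0 x(1) by auto
  have "A \<subseteq> B k"
  proof
    fix n assume "n \<in> A"
    then have "f n x = 1" unfolding f_def using x(2) by simp
    then show "n \<in> B k" unfolding B_def using k by force
  qed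
  then show False using nA by blast
qed


theorem theorem4p6:
  fixes I J K :: "nat set set" and X :: "'a set"
  assumes "is_ideal I" and "is_ideal J" and "is_ideal K"
  shows "((\<forall>f :: nat \<Rightarrow> 'a \<Rightarrow> real.
             (\<forall>n. continuous_map (discrete_topology X) euclideanreal (f n)) \<longrightarrow>
             I_pointwise I X f \<longrightarrow> I_quasi_normal J X f)
          \<longleftrightarrow> card_below X (bs_family J J I))
       \<and> ((\<forall>f :: nat \<Rightarrow> 'a \<Rightarrow> real.
             (\<forall>n. continuous_map (discrete_topology X) euclideanreal (f n)) \<longrightarrow>
             I_pointwise I X f \<longrightarrow> I_sigma_uniform K X f)
          \<longleftrightarrow> card_below X (bsigma_family I K))
       \<and> ((\<forall>f :: nat \<Rightarrow> 'a \<Rightarrow> real.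
             (\<forall>n. continuous_map (discrete_topology X) euclideanreal (f n)) \<longrightarrow>
             I_quasi_normal J X f \<longrightarrow> I_sigma_uniform K X f)
          \<longleftrightarrow> card_below X (addw_family J K))"
proof (intro conjI iffI allI impI)
  show "card_below X (bs_family J J I)" if "\<forall>f :: nat \<Rightarrow> 'a \<Rightarrow> real.
             (\<forall>n. continuous_map (discrete_topology X) euclideanreal (f n)) \<longrightarrow>
             I_pointwise I X f \<longrightarrow> I_quasi_normal J X f"
    by (rule p1_nec[OF assms(1,2) that])
next
  fix f :: "nat \<Rightarrow> 'a \<Rightarrow> real"
  assume "card_below X (bs_family J J I)" "I_pointwise I X f"
  then show "I_quasi_normal J X f" by (rule p1_suff[OF assms(1,2)])
next
  show "card_below X (bsigma_family I K)" if "\<forall>f :: nat \<Rightarrow> 'a \<Rightarrow> real.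
             (\<forall>n. continuous_map (discrete_topology X) euclideanreal (f n)) \<longrightarrow>
             I_pointwise I X f \<longrightarrow> I_sigma_uniform K X f"
    by (rule p2_nec[OF assms(1,3) that])
next
  fix f :: "nat \<Rightarrow> 'a \<Rightarrow> real"
  assume "card_below X (bsigma_family I K)" "I_pointwise I X f"
  then show "I_sigma_uniform K X f" by (rule p2_suff[OF assms(1,3)])
next
  show "card_below X (addw_family J K)" if "\<forall>f :: nat \<Rightarrow> 'a \<Rightarrow> real.
             (\<forall>n. continuous_map (discrete_topology X) euclideanreal (f n)) \<longrightarrow>
             I_quasi_normal J X f \<longrightarrow> I_sigma_uniform K X f"
    by (rule p3_nec[OF assms(2,3) that])
next
  fix f :: "nat \<Rightarrow> 'a \<Rightarrow> real"
  assume "card_below X (addw_family J K)" "I_quasi_normal J X f"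
  then show "I_sigma_uniform K X f" by (rule p3_suff[OF assms(2,3)])
qed

end
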